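(* $\mathbf{PL}<^{\mathrm{fin}}_{\mathrm{Learn}}E_{set}$: every finite $\mathbf{PL}$-learnable family of structures is $E_{set}$-learnable, and there is a finite family that is $E_{set}$-learnable but not $\mathbf{PL}$-learnable.
   Context: All structures are countable, have domain $\mathbb{N}$, are in a finite relational signature, and are identified with their atomic diagrams (elements of $2^{\mathbb{N}}$). A family of structures $\mathfrak{K}$ is a countable set of pairwise nonisomorphic such structures; $\mathcal{S}\restriction_s$ is the finite substructure on $\{0,\dots,s\}$; $\mathrm{LD}(\mathfrak{K})\subseteq2^{\mathbb{N}}$ is the set of structures with domain $\mathbb{N}$ isomorphic to a member of $\mathfrak{K}$ (subspace topology). For an equivalence relation $E$ on a space $X$, $\mathfrak{K}$ is $E$-learnable if there is a continuous $\Gamma:\mathrm{LD}(\mathfrak{K})\to X$ with $\mathcal{S}\cong\mathcal{S}'\iff\Gamma(\mathcal{S})E\Gamma(\mathcal{S}')$ on $\mathrm{LD}(\mathfrak{K})$. Fix a computable bijection $\langle\cdot,\cdot\rangle:\mathbb{N}^2\to\mathbb{N}$; for $p\in\mathbb{N}^{\mathbb{N}\times\mathbb{N}}$ let $p^{[m]}(n)=p(\langle m,n\rangle)$; $p\,E_{set}\,q\iff\{p^{[m]}:m\in\mathbb{N}\}=\{q^{[m]}:m\in\mathbb{N}\}$. A learner is an arbitrary function from $\{\mathcal{S}\restriction_s:\mathcal{S}\in\mathrm{LD}(\mathfrak{K})\}$ to $\{\ulcorner\mathcal{A}\urcorner:\mathcal{A}\in\mathfrak{K}\}\cup\{?\}$.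 $\mathfrak{K}$ is $\mathbf{PL}$-learnable if some learner $\mathbf{M}$ satisfies: for every $\mathcal{S}\in\mathrm{LD}(\mathfrak{K})$ and $\mathcal{A}\in\mathfrak{K}$, $\{n:\mathbf{M}(\mathcal{S}\restriction_n)=\ulcorner\mathcal{A}\urcorner\}$ is infinite iff $\mathcal{A}\cong\mathcal{S}$. $X\leq^{\mathrm{fin}}_{\mathrm{Learn}}Y$ means every finite $X$-learnable family is $Y$-learnable; $<^{\mathrm{fin}}_{\mathrm{Learn}}$ means $\leq^{\mathrm{fin}}_{\mathrm{Learn}}$ but not the converse. *)

theory Defs
  imports "HOL-Analysis.Analysis" "HOL-Library.Nat_Bijection"
begin

text \<open>A finite relational signature is given by the list of arities of its relation
symbols.  A structure with domain nat is identified with its atomic diagram, i.e. the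
characteristic function of the set of true atomic facts (i, xs) meaning R_i(xs).
(Equality atoms are constant and therefore omitted.)\<close>

type_synonym struc = "nat \<times> nat list \<Rightarrow> bool"

definition is_struc :: "nat list \<Rightarrow> struc \<Rightarrow> bool" where
  "is_struc sig S \<longleftrightarrow> (\<forall>i xs. S (i, xs) \<longrightarrow> i < length sig \<and> length xs = sig ! i)"

definition iso :: "struc \<Rightarrow> struc \<Rightarrow> bool" where
  "iso S T \<longleftrightarrow> (\<exists>f::nat \<Rightarrow> nat. bij f \<and> (\<forall>i xs. S (i, xs) = T (i, map f xs)))"

definition restr :: "struc \<Rightarrow> nat \<Rightarrow> struc" where
  "restr S s = (\<lambda>(i, xs). S (i, xs) \<and> set xs \<subseteq> {0..s})"

definition family :: "nat list \<Rightarrow> struc set \<Rightarrow> bool" where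
  "family sig K \<longleftrightarrow> countable K \<and> (\<forall>A\<in>K. is_struc sig A) \<and>
     (\<forall>A\<in>K. \<forall>B\<in>K. iso A B \<longrightarrow> A = B)"

definition LD :: "nat list \<Rightarrow> struc set \<Rightarrow> struc set" where
  "LD sig K = {S. is_struc sig S \<and> (\<exists>A\<in>K. iso S A)}"

definition cantor_top :: "struc topology" where
  "cantor_top = product_topology (\<lambda>_. discrete_topology UNIV) UNIV"

definition baire_top :: "(nat \<Rightarrow> nat) topology" where
  "baire_top = product_topology (\<lambda>_. discrete_topology UNIV) UNIV"

definition E_set :: "(nat \<Rightarrow> nat) \<Rightarrow> (nat \<Rightarrow> nat) \<Rightarrow> bool" where
  "E_set p q \<longleftrightarrow> range (\<lambda>m. \<lambda>n. p (prod_encode (m, n))) = range (\<lambda>m. \<lambda>n. q (prod_encode (m, n)))"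

definition Eset_learnable :: "nat list \<Rightarrow> struc set \<Rightarrow> bool" where
  "Eset_learnable sig K \<longleftrightarrow> (\<exists>\<Gamma>.
     continuous_map (subtopology cantor_top (LD sig K)) baire_top \<Gamma> \<and>
     (\<forall>S\<in>LD sig K. \<forall>S'\<in>LD sig K. iso S S' \<longleftrightarrow> E_set (\<Gamma> S) (\<Gamma> S')))"

text \<open>Learner: outputs Some A (the code of A \<in> K) or None (the answer ?).\<close>
definition PL_learnable :: "nat list \<Rightarrow> struc set \<Rightarrow> bool" where
  "PL_learnable sig K \<longleftrightarrow> (\<exists>M :: struc \<Rightarrow> struc option.
     (\<forall>S\<in>LD sig K. \<forall>n. M (restr S n) \<in> Some ` K \<union> {None}) \<and>
     (\<forall>S\<in>LD sig K. \<forall>A\<in>K. infinite {n. M (restr S n) = Some A} \<longleftrightarrow> iso A S))"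

end

theory Submission
  imports Defs
begin

lemma topspace_cantor[simp]: "topspace cantor_top = UNIV"
  unfolding cantor_top_def by (auto simp: PiE_def extensional_def)

lemma cyl_open:
  assumes "finite F"
  shows "openin cantor_top {S. \<forall>a\<in>F. S a = S0 a}"
  using assms
proof (induction F rule: finite_induct)
  case empty
  then show ?case using openin_topspace[of cantor_top] by simp
next
  case (insert a F)
  have c: "continuous_map cantor_top (discrete_topology UNIV) (\<lambda>S. S a)"
    unfolding cantor_top_def by (rule continuous_map_product_projection) simp
  have "openin cantor_top {S \<in> topspace cantor_top. S a \<in> {S0 a}}"
    by (rule openin_continuous_map_preimage[OF c]) simp
  then have o1: "openin cantor_top {S. S a = S0 a}" by simp
  have "{S. \<forall>b\<in>insert a F. S b = S0 b} = {S. S a = S0 a} \<inter> {S. \<forall>b\<in>F. S b = S0 b}" by auto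
  then show ?case using openin_Int[OF o1 insert.IH] by simp
qed

lemma cont_local:
  assumes "\<And>p. \<exists>F. finite F \<and> (\<forall>S\<in>X. \<forall>S'\<in>X. (\<forall>a\<in>F. S a = S' a) \<longrightarrow> G S p = G S' p)"
  shows "continuous_map (subtopology cantor_top X) baire_top G"
  unfolding baire_top_def
proof (rule continuous_map_componentwise_UNIV[THEN iffD2], intro allI)
  fix p
  obtain F where F: "finite F" "\<forall>S\<in>X. \<forall>S'\<in>X. (\<forall>a\<in>F. S a = S' a) \<longrightarrow> G S p = G S' p"
    using assms by blast
  show "continuous_map (subtopology cantor_top X) (discrete_topology UNIV) (\<lambda>x. G x p)"
    unfolding continuous_map_def
  proof (intro conjI allI impI)
    fix U :: "nat set"
    let ?T = "\<Union>{{S. \<forall>a\<in>F. S a = S0 a} | S0. S0 \<in> X \<and> G S0 p \<in> U}"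
    have "openin cantor_top ?T" using cyl_open[OF F(1)] by blast
    moreover have "{x \<in> topspace (subtopology cantor_top X). G x p \<in> U} = ?T \<inter> X"
    proof -
      have "?T \<inter> X \<subseteq> {x \<in> X. G x p \<in> U}"
      proof
        fix x assume "x \<in> ?T \<inter> X"
        then obtain S0 where "S0 \<in> X" "G S0 p \<in> U" "\<forall>a\<in>F. x a = S0 a" "x \<in> X" by blast
        then have "G x p = G S0 p" using F(2) by blast
        then show "x \<in> {x \<in> X. G x p \<in> U}" using \<open>G S0 p \<in> U\<close> \<open>x \<in> X\<close> by simp
      qed
      moreover have "{x \<in> X. G x p \<in> U} \<subseteq> ?T \<inter> X" by blast
      ultimately show ?thesis by auto
    qed
    ultimately show "openin (subtopology cantor_top X) {x \<in> topspace (subtopology cantor_top X). G x p \<in> U}"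
      unfolding openin_subtopology by blast
  qed auto
qed

definition stp :: "nat \<Rightarrow> nat \<Rightarrow> nat" where
  "stp j n = (if j \<le> n then 1 else 0)"

definition colf :: "(nat \<Rightarrow> nat \<Rightarrow> nat \<Rightarrow> struc \<Rightarrow> bool) \<Rightarrow> struc \<Rightarrow> nat \<Rightarrow> nat \<Rightarrow> nat \<Rightarrow> nat" where
  "colf Q S i x n = prod_encode (i, if even x then stp (x div 2) n
       else (if \<exists>t\<le>n. Q i (x div 2) t S then 1 else 0))"

definition Gam :: "(nat \<Rightarrow> nat \<Rightarrow> nat \<Rightarrow> struc \<Rightarrow> bool) \<Rightarrow> struc \<Rightarrow> nat \<Rightarrow> nat" where
  "Gam Q S p = colf Q S (fst (prod_decode (fst (prod_decode p)))) (snd (prod_decode (fst (prod_decode p)))) (snd (prod_decode p))"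

definition CS :: "(nat \<Rightarrow> nat \<Rightarrow> nat \<Rightarrow> struc \<Rightarrow> bool) \<Rightarrow> struc \<Rightarrow> (nat \<Rightarrow> nat) set" where
  "CS Q S = range (\<lambda>(i, x). colf Q S i x)"

lemma range_Gam: "range (\<lambda>m. \<lambda>n. Gam Q S (prod_encode (m, n))) = CS Q S"
proof -
  have "(\<lambda>m. \<lambda>n. Gam Q S (prod_encode (m, n))) = (\<lambda>(i, x). colf Q S i x) \<circ> prod_decode"
    by (rule ext) (simp add: Gam_def case_prod_beta fun_eq_iff)
  moreover have "range prod_decode = UNIV" using bij_prod_decode by (simp add: bij_def)
  ultimately show ?thesis unfolding CS_def by (metis image_comp)
qed

lemma E_set_Gam: "E_set (Gam Q S) (Gam Q S') \<longleftrightarrow> CS Q S = CS Q S'"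
  unfolding E_set_def range_Gam ..

lemma zero_in: "(\<lambda>n. prod_encode (i, 0)) \<in> CS Q S \<longleftrightarrow> (\<exists>s. \<forall>t. \<not> Q i s t S)"
proof
  assume "(\<lambda>n. prod_encode (i, 0)) \<in> CS Q S"
  then obtain i' x where e: "(\<lambda>n. prod_encode (i, 0)) = colf Q S i' x"
    unfolding CS_def by auto
  have e2: "\<And>n. prod_encode (i, 0) = colf Q S i' x n" using e by metis
  show "\<exists>s. \<forall>t. \<not> Q i s t S"
  proof (cases "even x")
    case True
    have "prod_encode (i, 0) = prod_encode (i', stp (x div 2) (x div 2))"
      using e2[of "x div 2"] True by (simp add: colf_def)
    then show ?thesis by (simp add: stp_def prod_encode_eq)
  next
    case False
    have "\<forall>t. \<not> Q i (x div 2) t S"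
    proof
      fix t
      have "prod_encode (i, 0) = prod_encode (i', if \<exists>t'\<le>t. Q i' (x div 2) t' S then 1 else 0)"
        using e2[of t] False by (simp add: colf_def)
      then show "\<not> Q i (x div 2) t S" by (auto simp: prod_encode_eq split: if_splits)
    qed
    then show ?thesis by blast
  qed
next
  assume "\<exists>s. \<forall>t. \<not> Q i s t S"
  then obtain s where s: "\<forall>t. \<not> Q i s t S" by blast
  have "colf Q S i (2 * s + 1) = (\<lambda>n. prod_encode (i, 0))"
    using s by (simp add: colf_def fun_eq_iff)
  then show "(\<lambda>n. prod_encode (i, 0)) \<in> CS Q S" unfolding CS_def
    by (metis (no_types, lifting) case_prod_conv rangeI)
qed

lemma CS_sub:
  assumes "\<forall>i. (\<exists>s. \<forall>t. \<not> Q i s t S) \<longrightarrow> (\<exists>s. \<forall>t. \<not> Q i s t S')"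
  shows "CS Q S \<subseteq> CS Q S'"
proof
  fix c assume "c \<in> CS Q S"
  then obtain i x where c: "c = colf Q S i x" unfolding CS_def by auto
  show "c \<in> CS Q S'"
  proof (cases "even x")
    case True
    then have "c = colf Q S' i x" unfolding c by (simp add: colf_def fun_eq_iff)
    then show ?thesis unfolding CS_def by (metis (no_types, lifting) case_prod_conv rangeI)
  next
    case False
    show ?thesis
    proof (cases "\<exists>t. Q i (x div 2) t S")
      case True
      define t0 where "t0 = (LEAST t. Q i (x div 2) t S)"
      have "\<And>n. (\<exists>t\<le>n. Q i (x div 2) t S) \<longleftrightarrow> t0 \<le> n"
        using True unfolding t0_def by (metis LeastI Least_le le_trans)
      then have "c = colf Q S' i (2 * t0)" unfolding c using False by (simp add: colf_def fun_eq_iff stp_def)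
      then show ?thesis unfolding CS_def by (metis (no_types, lifting) case_prod_conv rangeI)
    next
      case nt: False
      then have "c = (\<lambda>n. prod_encode (i, 0))" unfolding c using False by (simp add: colf_def fun_eq_iff)
      moreover have "\<exists>s. \<forall>t. \<not> Q i s t S'" using assms nt by blast
      ultimately show ?thesis using zero_in by blast
    qed
  qed
qed

lemma E_set_Gam_iff:
  "E_set (Gam Q S) (Gam Q S') \<longleftrightarrow> (\<forall>i. (\<exists>s. \<forall>t. \<not> Q i s t S) \<longleftrightarrow> (\<exists>s. \<forall>t. \<not> Q i s t S'))"
proof
  assume "E_set (Gam Q S) (Gam Q S')"
  then have "CS Q S = CS Q S'" using E_set_Gam by blast
  then show "\<forall>i. (\<exists>s. \<forall>t. \<not> Q i s t S) \<longleftrightarrow> (\<exists>s. \<forall>t. \<not> Q i s t S')"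
    using zero_in by metis
next
  assume "\<forall>i. (\<exists>s. \<forall>t. \<not> Q i s t S) \<longleftrightarrow> (\<exists>s. \<forall>t. \<not> Q i s t S')"
  then have "CS Q S = CS Q S'" using CS_sub by (metis subset_antisym)
  then show "E_set (Gam Q S) (Gam Q S')" using E_set_Gam by blast
qed

lemma Gam_cont:
  assumes "\<And>i s t. \<exists>F. finite F \<and> (\<forall>S\<in>X. \<forall>S'\<in>X. (\<forall>a\<in>F. S a = S' a) \<longrightarrow> Q i s t S = Q i s t S')"
  shows "continuous_map (subtopology cantor_top X) baire_top (Gam Q)"
proof (rule cont_local)
  fix p
  define i where "i = fst (prod_decode (fst (prod_decode p)))"
  define x where "x = snd (prod_decode (fst (prod_decode p)))"
  define n where "n = snd (prod_decode p)"
  obtain FF where FF: "\<And>t. finite (FF t) \<and> (\<forall>S\<in>X. \<forall>S'\<in>X. (\<forall>a\<in>FF t. S a = S' a) \<longrightarrow> Q i (x div 2) t S = Q i (x div 2) t S')"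
    using assms by metis
  have G: "\<And>S. Gam Q S p = colf Q S i x n" unfolding Gam_def i_def x_def n_def ..
  show "\<exists>F. finite F \<and> (\<forall>S\<in>X. \<forall>S'\<in>X. (\<forall>a\<in>F. S a = S' a) \<longrightarrow> Gam Q S p = Gam Q S' p)"
  proof (intro exI conjI ballI impI)
    show "finite (\<Union>t\<le>n. FF t)" using FF by auto
    fix S S' assume S: "S \<in> X" "S' \<in> X" and ag: "\<forall>a\<in>(\<Union>t\<le>n. FF t). S a = S' a"
    have "\<And>t. t \<le> n \<Longrightarrow> Q i (x div 2) t S = Q i (x div 2) t S'"
      using FF S ag by blast
    then have "(\<exists>t\<le>n. Q i (x div 2) t S) = (\<exists>t\<le>n. Q i (x div 2) t S')" by blast
    then show "Gam Q S p = Gam Q S' p" unfolding G colf_def by simp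
  qed
qed

lemma iso_refl: "iso S S"
  unfolding iso_def by (rule exI[of _ id]) simp

lemma iso_sym: assumes "iso S T" shows "iso T S"
proof -
  obtain f where f: "bij f" "\<forall>i xs. S (i, xs) = T (i, map f xs)" using assms iso_def by blast
  have "\<forall>i ys. T (i, ys) = S (i, map (inv f) ys)"
  proof (intro allI)
    fix i ys
    have "map f (map (inv f) ys) = ys"
      using f(1) by (simp add: map_idI bij_is_surj surj_f_inv_f)
    then show "T (i, ys) = S (i, map (inv f) ys)" using f(2) by metis
  qed
  then show ?thesis unfolding iso_def using bij_imp_bij_inv[OF f(1)] by blast
qed

lemma iso_trans: assumes "iso S T" "iso T U" shows "iso S U"
proof -
  obtain f where f: "bij f" "\<forall>i xs. S (i, xs) = T (i, map f xs)" using assms iso_def by blast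
  obtain g where g: "bij g" "\<forall>i xs. T (i, xs) = U (i, map g xs)" using assms iso_def by blast
  have "\<forall>i xs. S (i, xs) = U (i, map (g \<circ> f) xs)" using f g by simp
  then show ?thesis unfolding iso_def using bij_comp[OF f(1) g(1)] by blast
qed

lemma restr_local:
  assumes "is_struc sig S" "is_struc sig S'"
    "\<forall>a\<in>{(j, xs). j < length sig \<and> length xs = sig ! j \<and> set xs \<subseteq> {0..t}}. S a = S' a"
  shows "restr S t = restr S' t"
proof (rule ext, clarify)
  fix j xs
  show "restr S t (j, xs) = restr S' t (j, xs)"
  proof (cases "j < length sig \<and> length xs = sig ! j")
    case True
    then show ?thesis using assms(3) unfolding restr_def by auto
  next
    case False
    then show ?thesis using assms(1,2) unfolding restr_def is_struc_def by auto
  qed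
qed

lemma finite_coords: "finite {(j, xs). j < length sig \<and> length xs = sig ! j \<and> set xs \<subseteq> {0..(t::nat)}}"
proof -
  have "{(j, xs). j < length sig \<and> length xs = sig ! j \<and> set xs \<subseteq> {0..t}}
     \<subseteq> (SIGMA j:{..<length sig}. {xs. set xs \<subseteq> {0..t} \<and> length xs = sig ! j})" by auto
  moreover have "finite (SIGMA j:{..<length sig}. {xs. set xs \<subseteq> {0..t} \<and> length xs = sig ! j})"
    by (intro finite_SigmaI finite_lists_length_eq) auto
  ultimately show ?thesis by (rule finite_subset)
qed

lemma part1:
  assumes fam: "family sig K" and pl: "PL_learnable sig K"
  shows "Eset_learnable sig K"
proof -
  obtain M where M: "\<forall>S\<in>LD sig K. \<forall>A\<in>K. infinite {n. M (restr S n) = Some A} \<longleftrightarrow> iso A S"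
    using pl unfolding PL_learnable_def by blast
  define A where "A = from_nat_into K"
  define Q where "Q = (\<lambda>i s t S. s < t \<and> M (restr S t) = Some (A i))"
  have cont: "continuous_map (subtopology cantor_top (LD sig K)) baire_top (Gam Q)"
  proof (rule Gam_cont)
    fix i s t
    show "\<exists>F. finite F \<and> (\<forall>S\<in>LD sig K. \<forall>S'\<in>LD sig K. (\<forall>a\<in>F. S a = S' a) \<longrightarrow> Q i s t S = Q i s t S')"
    proof (intro exI conjI ballI impI)
      show "finite {(j, xs). j < length sig \<and> length xs = sig ! j \<and> set xs \<subseteq> {0..t}}"
        by (rule finite_coords)
      fix S S' assume "S \<in> LD sig K" "S' \<in> LD sig K"
        "\<forall>a\<in>{(j, xs). j < length sig \<and> length xs = sig ! j \<and> set xs \<subseteq> {0..t}}. S a = S' a"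
      then have "restr S t = restr S' t" using restr_local unfolding LD_def by blast
      then show "Q i s t S = Q i s t S'" unfolding Q_def by simp
    qed
  qed
  have key: "(\<exists>s. \<forall>t. \<not> Q i s t S) \<longleftrightarrow> \<not> iso (A i) S" if S: "S \<in> LD sig K" for i S
  proof -
    have Kne: "K \<noteq> {}" using S unfolding LD_def by blast
    have AK: "A i \<in> K" unfolding A_def using from_nat_into[OF Kne] .
    have "(\<exists>s. \<forall>t. \<not> Q i s t S) \<longleftrightarrow> finite {n. M (restr S n) = Some (A i)}"
    proof
      assume "\<exists>s. \<forall>t. \<not> Q i s t S"
      then obtain s where "\<forall>t. \<not> Q i s t S" by blast
      then have "{n. M (restr S n) = Some (A i)} \<subseteq> {..s}" unfolding Q_def by (auto simp: not_less)
      then show "finite {n. M (restr S n) = Some (A i)}" using finite_subset by blast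
    next
      assume "finite {n. M (restr S n) = Some (A i)}"
      then obtain s where "\<forall>n\<in>{n. M (restr S n) = Some (A i)}. n \<le> s"
        using finite_nat_set_iff_bounded_le by blast
      then have "\<forall>t. \<not> Q i s t S" unfolding Q_def by force
      then show "\<exists>s. \<forall>t. \<not> Q i s t S" by blast
    qed
    then show ?thesis using M S AK by blast
  qed
  have "\<forall>S\<in>LD sig K. \<forall>S'\<in>LD sig K. iso S S' \<longleftrightarrow> E_set (Gam Q S) (Gam Q S')"
  proof (intro ballI)
    fix S S' assume S: "S \<in> LD sig K" and S': "S' \<in> LD sig K"
    have Kne: "K \<noteq> {}" using S unfolding LD_def by blast
    have rA: "range A = K" unfolding A_def using Kne fam family_def by simp
    have "E_set (Gam Q S) (Gam Q S') \<longleftrightarrow> (\<forall>i. iso (A i) S \<longleftrightarrow> iso (A i) S')"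
      unfolding E_set_Gam_iff using key[OF S] key[OF S'] by blast
    also have "\<dots> \<longleftrightarrow> (\<forall>B\<in>K. iso B S \<longleftrightarrow> iso B S')" using rA by auto
    also have "\<dots> \<longleftrightarrow> iso S S'"
    proof
      assume h: "\<forall>B\<in>K. iso B S \<longleftrightarrow> iso B S'"
      obtain B where "B \<in> K" "iso S B" using S unfolding LD_def by blast
      then show "iso S S'" using h iso_sym iso_trans by blast
    next
      assume "iso S S'"
      then show "\<forall>B\<in>K. iso B S \<longleftrightarrow> iso B S'" using iso_sym iso_trans by blast
    qed
    finally show "iso S S' \<longleftrightarrow> E_set (Gam Q S) (Gam Q S')" by simp
  qed
  then show ?thesis unfolding Eset_learnable_def using cont by blast
qed

definition rk :: "nat set \<Rightarrow> nat \<Rightarrow> nat" where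
  "rk N x = card {y\<in>N. y < x}"

lemma rk_fin: "finite {y\<in>N. y < (x::nat)}"
  by (rule finite_subset[of _ "{..<x}"]) auto

lemma rk_mono: assumes "x \<in> N" "x < z" shows "rk N x < rk N z"
proof -
  have "{y\<in>N. y < x} \<subset> {y\<in>N. y < z}" using assms by auto
  then show ?thesis unfolding rk_def using psubset_card_mono[OF rk_fin] by blast
qed

lemma rk_inj: assumes "x \<in> N" "z \<in> N" "rk N x = rk N z" shows "x = z"
  using rk_mono[of x N z] rk_mono[of z N x] assms by (metis less_irrefl linorder_neqE_nat)

lemma rk_lt_card: assumes "finite N" "x \<in> N" shows "rk N x < card N"
proof -
  have "{y\<in>N. y < x} \<subset> N" using assms by auto
  then show ?thesis unfolding rk_def using psubset_card_mono[OF assms(1)] by blast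
qed

lemma rk_surj: assumes "finite N \<longrightarrow> k < card N" shows "\<exists>x\<in>N. rk N x = k"
  using assms
proof (induction k)
  case 0
  have "N \<noteq> {}" using 0 by auto
  then obtain x0 where "x0 \<in> N" by blast
  define x where "x = (LEAST x. x \<in> N)"
  have xN: "x \<in> N" unfolding x_def using LeastI[of "\<lambda>x. x \<in> N", OF \<open>x0 \<in> N\<close>] .
  have "{y\<in>N. y < x} = {}" unfolding x_def using not_less_Least by blast
  then show ?case using xN unfolding rk_def by auto
next
  case (Suc k)
  then obtain x where x: "x \<in> N" "rk N x = k" by (metis Suc_lessD)
  have "\<exists>z\<in>N. x < z"
  proof (rule ccontr)
    assume "\<not> (\<exists>z\<in>N. x < z)"
    then have e: "N = insert x {y\<in>N. y < x}" using x(1) by (auto simp: not_less le_less)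
    then have "finite N" using rk_fin by (metis finite_insert)
    moreover have "card N \<le> Suc k" using e x(2) rk_fin unfolding rk_def by (metis card_insert_le_m1 le_refl zero_less_Suc diff_Suc_1)
    ultimately show False using Suc.prems by simp
  qed
  then obtain z0 where "z0 \<in> N" "x < z0" by blast
  define z where "z = (LEAST z. z \<in> N \<and> x < z)"
  have z: "z \<in> N" "x < z" unfolding z_def using LeastI[of "\<lambda>z. z \<in> N \<and> x < z", OF conjI[OF \<open>z0 \<in> N\<close> \<open>x < z0\<close>]] by auto
  have "{y\<in>N. y < z} = insert x {y\<in>N. y < x}"
  proof (intro set_eqI iffI)
    fix y assume y: "y \<in> {y\<in>N. y < z}"
    have "\<not> x < y" using y not_less_Least[of y "\<lambda>z. z \<in> N \<and> x < z"] unfolding z_def by auto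
    then show "y \<in> insert x {y\<in>N. y < x}" using y by auto
  qed (use z x in auto)
  then have "rk N z = Suc k" unfolding rk_def using x(2) rk_fin unfolding rk_def by simp
  then show ?case using z by blast
qed

definition gN :: "nat set \<Rightarrow> nat \<Rightarrow> int" where
  "gN N x = (if x \<in> N then - (int (rk N x) + 1) else int (rk (- N) x))"

definition Sg :: "(nat \<Rightarrow> int) \<Rightarrow> struc" where
  "Sg g = (\<lambda>(i, xs). i = 0 \<and> length xs = 2 \<and> g (xs ! 0) < g (xs ! 1))"

lemma gN_inj: "inj (gN N)"
proof (rule injI)
  fix x z assume e: "gN N x = gN N z"
  show "x = z"
  proof (cases "x \<in> N")
    case True
    then have "z \<in> N" using e unfolding gN_def by (auto split: if_splits)
    then show ?thesis using True e rk_inj[of x N z] unfolding gN_def by simp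
  next
    case False
    then have "z \<notin> N" using e unfolding gN_def by (auto split: if_splits)
    then show ?thesis using False e rk_inj[of x "-N" z] unfolding gN_def by simp
  qed
qed

lemma Sg_shift: "Sg (\<lambda>x. g x + c) = Sg g"
  unfolding Sg_def by simp

lemma iso_Sg:
  assumes "inj g" "inj h" "range g = range h"
  shows "iso (Sg g) (Sg h)"
proof -
  define f where "f = inv h \<circ> g"
  have hf: "h (f x) = g x" for x
    unfolding f_def using assms(3) by (metis comp_apply f_inv_into_f rangeI)
  have "bij f"
  proof (rule bijI)
    show "inj f" by (rule injI) (metis hf assms(1) injD)
    show "surj f"
    proof -
      have "y \<in> range f" for y
      proof -
        obtain x where "h y = g x" using assms(3) by (metis rangeE rangeI)
        then have "f x = y" unfolding f_def using assms(2) by (metis comp_apply inv_f_f)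
        then show ?thesis by blast
      qed
      then show ?thesis by blast
    qed
  qed
  moreover have "\<forall>i xs. Sg g (i, xs) = Sg h (i, map f xs)"
  proof (intro allI)
    fix i and xs :: "nat list"
    show "Sg g (i, xs) = Sg h (i, map f xs)"
    proof (cases "length xs = 2")
      case True
      then show ?thesis unfolding Sg_def by (simp add: hf)
    next
      case False
      then show ?thesis unfolding Sg_def by simp
    qed
  qed
  ultimately show ?thesis unfolding iso_def by blast
qed

lemma range_gN_inf:
  assumes "infinite N" "infinite (- N)"
  shows "range (gN N) = UNIV"
proof -
  have "z \<in> range (gN N)" for z
  proof (cases "z \<ge> 0")
    case True
    obtain x where x: "x \<in> - N" "rk (- N) x = nat z" using rk_surj[of "- N" "nat z"] assms(2) by blast
    then have "gN N x = z" unfolding gN_def using True by simp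
    then show ?thesis by (metis rangeI)
  next
    case False
    obtain x where x: "x \<in> N" "rk N x = nat (- z - 1)" using rk_surj[of N "nat (- z - 1)"] assms(1) by blast
    then have "gN N x = z" unfolding gN_def using False by simp
    then show ?thesis by (metis rangeI)
  qed
  then show ?thesis by blast
qed

lemma range_gN_fin:
  assumes "finite N"
  shows "range (\<lambda>x. gN N x + int (card N)) = range int"
proof -
  have inf: "infinite (- N)" using assms by (simp add: Compl_eq_Diff_UNIV Diff_infinite_finite)
  have "range (\<lambda>x. gN N x + int (card N)) \<subseteq> range int"
  proof clarify
    fix x
    have "gN N x + int (card N) \<ge> 0" using rk_lt_card[OF assms, of x] unfolding gN_def by auto
    then show "gN N x + int (card N) \<in> range int" by (metis nonneg_int_cases rangeI)
  qed
  moreover have "int k \<in> range (\<lambda>x. gN N x + int (card N))" for k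
  proof (cases "k < card N")
    case True
    obtain x where x: "x \<in> N" "rk N x = card N - 1 - k" using rk_surj[of N "card N - 1 - k"] True by auto
    then have "gN N x + int (card N) = int k" unfolding gN_def using True by simp
    then show ?thesis by (metis rangeI)
  next
    case False
    obtain x where x: "x \<in> - N" "rk (- N) x = k - card N" using rk_surj[of "- N" "k - card N"] inf by blast
    then have "gN N x + int (card N) = int k" unfolding gN_def using False by simp
    then show ?thesis by (metis rangeI)
  qed
  ultimately show ?thesis by blast
qed

definition Aw :: struc where "Aw = Sg int"
definition Evn :: "nat set" where "Evn = {x. even x}"
definition Az :: struc where "Az = Sg (gN Evn)"
definition hasl :: "struc \<Rightarrow> bool" where
  "hasl S \<longleftrightarrow> (\<exists>s. \<forall>t. t \<noteq> s \<longrightarrow> S (0, [s, t]))"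

lemma struc_Sg: "is_struc [2] (Sg g)"
  unfolding is_struc_def Sg_def by simp

lemma hasl_iso: assumes "iso S T" "hasl S" shows "hasl T"
proof -
  obtain f where f: "bij f" "\<forall>i xs. S (i, xs) = T (i, map f xs)" using assms iso_def by blast
  obtain s where s: "\<forall>t. t \<noteq> s \<longrightarrow> S (0, [s, t])" using assms(2) hasl_def by blast
  have "\<forall>t. t \<noteq> f s \<longrightarrow> T (0, [f s, t])"
  proof (intro allI impI)
    fix t assume t: "t \<noteq> f s"
    have ft: "f (inv f t) = t" using f(1) by (simp add: bij_is_surj surj_f_inv_f)
    then have "inv f t \<noteq> s" using t by auto
    then have "S (0, [s, inv f t])" using s by blast
    moreover have "S (0, [s, inv f t]) = T (0, map f [s, inv f t])" using f(2) by blast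
    ultimately show "T (0, [f s, t])" using ft by simp
  qed
  then show ?thesis unfolding hasl_def by blast
qed

lemma hasl_Aw: "hasl Aw"
  unfolding hasl_def Aw_def Sg_def by (rule exI[of _ 0]) simp

lemma evn_inf: "infinite Evn" "infinite (- Evn)"
proof -
  show "infinite Evn" unfolding infinite_nat_iff_unbounded Evn_def
  proof
    fix m :: nat
    show "\<exists>n>m. n \<in> {x. even x}" by (rule exI[of _ "2 * m + 2"]) simp
  qed
  show "infinite (- Evn)" unfolding infinite_nat_iff_unbounded Evn_def
  proof
    fix m :: nat
    show "\<exists>n>m. n \<in> - {x. even x}"
    proof (cases "even m")
      case True
      then show ?thesis by (intro exI[of _ "Suc m"]) simp
    next
      case False
      then show ?thesis by (intro exI[of _ "Suc (Suc m)"]) simp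
    qed
  qed
qed

lemma not_hasl_Az: "\<not> hasl Az"
proof
  assume "hasl Az"
  then obtain s where s: "\<forall>t. t \<noteq> s \<longrightarrow> gN Evn s < gN Evn t"
    unfolding hasl_def Az_def Sg_def by auto
  define t where "t = 2 * s + 2"
  have tE: "t \<in> Evn" unfolding t_def Evn_def by simp
  have "gN Evn t < gN Evn s"
  proof (cases "s \<in> Evn")
    case True
    have "rk Evn s < rk Evn t" using rk_mono[OF True] unfolding t_def by simp
    then show ?thesis using True tE unfolding gN_def by simp
  next
    case False
    then show ?thesis using tE unfolding gN_def by simp
  qed
  moreover have "t \<noteq> s" unfolding t_def by simp
  then have "gN Evn s < gN Evn t" using s by blast
  ultimately show False by linarith
qed

lemma iso_fin: assumes "finite N" shows "iso (Sg (gN N)) Aw"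
proof -
  have "Sg (gN N) = Sg (\<lambda>x. gN N x + int (card N))" using Sg_shift by metis
  moreover have "inj (\<lambda>x. gN N x + int (card N))" using gN_inj by (simp add: inj_def)
  moreover have "iso (Sg (\<lambda>x. gN N x + int (card N))) (Sg int)"
    by (rule iso_Sg[OF calculation(2) inj_of_nat range_gN_fin[OF assms]])
  ultimately show ?thesis unfolding Aw_def by simp
qed

lemma iso_inf: assumes "infinite N" "infinite (- N)" shows "iso (Sg (gN N)) Az"
  unfolding Az_def by (rule iso_Sg[OF gN_inj gN_inj]) (simp add: range_gN_inf assms evn_inf)

lemma gN_local: assumes "\<forall>y\<le>x. y \<in> N \<longleftrightarrow> y \<in> N'" shows "gN N x = gN N' x"
proof -
  have "{y\<in>N. y < x} = {y\<in>N'. y < x}" "{y\<in>-N. y < x} = {y\<in>-N'. y < x}" using assms by auto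
  then show ?thesis unfolding gN_def rk_def using assms by auto
qed

lemma restr_local2: assumes "\<forall>y\<le>n. y \<in> N \<longleftrightarrow> y \<in> N'"
  shows "restr (Sg (gN N)) n = restr (Sg (gN N')) n"
proof (rule ext, clarify)
  fix i and xs :: "nat list"
  show "restr (Sg (gN N)) n (i, xs) = restr (Sg (gN N')) n (i, xs)"
  proof (cases "length xs = 2 \<and> set xs \<subseteq> {0..n}")
    case True
    have m: "xs ! 0 \<in> set xs" "xs ! 1 \<in> set xs" using True by simp_all
    then have "xs ! 0 \<le> n" "xs ! 1 \<le> n" using True by (meson atLeastAtMost_iff subsetD)+
    then have "gN N (xs ! 0) = gN N' (xs ! 0)" "gN N (xs ! 1) = gN N' (xs ! 1)"
      using gN_local assms by (meson le_trans)+
    then show ?thesis unfolding restr_def Sg_def by simp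
  next
    case False
    then show ?thesis unfolding restr_def Sg_def by auto
  qed
qed

primrec sq :: "(nat set \<Rightarrow> nat) \<Rightarrow> nat \<Rightarrow> nat set" where
  "sq nx 0 = {}"
| "sq nx (Suc k) = insert (Suc (nx (sq nx k))) (sq nx k)"

lemma sq_fin: "finite (sq nx k)"
  by (induction k) auto

lemma sq_eq: "sq nx k = (\<lambda>i. Suc (nx (sq nx i))) ` {..<k}"
  by (induction k) (auto simp: lessThan_Suc)

definition KK :: "struc set" where "KK = {Aw, Az}"

lemma not_iso_Aw_Az: "\<not> iso Aw Az" "\<not> iso Az Aw"
  using hasl_iso hasl_Aw not_hasl_Az iso_sym by blast+

lemma family_KK: "family [2] KK"
  unfolding family_def KK_def using not_iso_Aw_Az struc_Sg
  by (auto simp: Aw_def Az_def)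

lemma LD_KK: "S \<in> LD [2] KK \<Longrightarrow> iso S Aw \<or> iso S Az"
  unfolding LD_def KK_def by auto

lemma in_LD: "iso (Sg g) A \<Longrightarrow> A \<in> KK \<Longrightarrow> Sg g \<in> LD [2] KK"
  unfolding LD_def using struc_Sg by blast

lemma hasl_LD: assumes "S \<in> LD [2] KK" "S' \<in> LD [2] KK"
  shows "iso S S' \<longleftrightarrow> (hasl S \<longleftrightarrow> hasl S')"
proof
  assume "iso S S'" then show "hasl S \<longleftrightarrow> hasl S'" using hasl_iso iso_sym by blast
next
  assume h: "hasl S \<longleftrightarrow> hasl S'"
  have a: "iso S Aw \<Longrightarrow> hasl S" "iso S Az \<Longrightarrow> \<not> hasl S"
     "iso S' Aw \<Longrightarrow> hasl S'" "iso S' Az \<Longrightarrow> \<not> hasl S'"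
    using hasl_iso iso_sym hasl_Aw not_hasl_Az by blast+
  show "iso S S'" using LD_KK[OF assms(1)] LD_KK[OF assms(2)] h a iso_sym iso_trans by metis
qed

lemma Eset_KK: "Eset_learnable [2] KK"
proof -
  define Q where "Q = (\<lambda>(i::nat) s t (S::struc). t \<noteq> s \<and> \<not> S (0, [s, t]))"
  have cont: "continuous_map (subtopology cantor_top (LD [2] KK)) baire_top (Gam Q)"
  proof (rule Gam_cont)
    fix i s t
    show "\<exists>F. finite F \<and> (\<forall>S\<in>LD [2] KK. \<forall>S'\<in>LD [2] KK. (\<forall>a\<in>F. S a = S' a) \<longrightarrow> Q i s t S = Q i s t S')"
      by (rule exI[of _ "{(0, [s, t])}"]) (simp add: Q_def)
  qed
  have q: "(\<exists>s. \<forall>t. \<not> Q i s t S) \<longleftrightarrow> hasl S" for i S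
    unfolding Q_def hasl_def by auto
  have "\<forall>S\<in>LD [2] KK. \<forall>S'\<in>LD [2] KK. iso S S' \<longleftrightarrow> E_set (Gam Q S) (Gam Q S')"
    unfolding E_set_Gam_iff q using hasl_LD by blast
  then show ?thesis unfolding Eset_learnable_def using cont by blast
qed

lemma not_PL_KK: "\<not> PL_learnable [2] KK"
proof
  assume "PL_learnable [2] KK"
  then obtain M where M: "\<forall>S\<in>LD [2] KK. \<forall>A\<in>KK. infinite {n. M (restr S n) = Some A} \<longleftrightarrow> iso A S"
    unfolding PL_learnable_def by blast
  have AwK: "Aw \<in> KK" and AzK: "Az \<in> KK" unfolding KK_def by auto
  have fin_inf: "infinite {n. M (restr (Sg (gN F)) n) = Some Aw}" if "finite F" for F
  proof -
    have "Sg (gN F) \<in> LD [2] KK" using in_LD[OF iso_fin[OF that] AwK] .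
    then show ?thesis using M AwK iso_sym[OF iso_fin[OF that]] by blast
  qed
  define nxt where "nxt F = (LEAST n. (\<forall>y\<in>F. y < n) \<and> M (restr (Sg (gN F)) n) = Some Aw)" for F
  have nxt: "(\<forall>y\<in>F. y < nxt F) \<and> M (restr (Sg (gN F)) (nxt F)) = Some Aw" if F: "finite F" for F
  proof -
    obtain m where m: "\<forall>y\<in>F. y \<le> m" using F finite_nat_set_iff_bounded_le by blast
    obtain n where n: "n > m" "M (restr (Sg (gN F)) n) = Some Aw"
      using fin_inf[OF F] unfolding infinite_nat_iff_unbounded by blast
    have "(\<forall>y\<in>F. y < n) \<and> M (restr (Sg (gN F)) n) = Some Aw" using m n by force
    then show ?thesis unfolding nxt_def by (rule LeastI)
  qed
  define c where "c k = nxt (sq nxt k)" for k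
  have c1: "\<forall>y\<in>sq nxt k. y < c k" "M (restr (Sg (gN (sq nxt k))) (c k)) = Some Aw" for k
    using nxt[OF sq_fin] unfolding c_def by blast+
  have cs: "Suc (c k) < c (Suc k)" for k
    using c1(1)[of "Suc k"] unfolding c_def by simp
  have smono: "strict_mono c"
  proof (rule strict_monoI_Suc)
    fix n show "c n < c (Suc n)" using cs[of n] by simp
  qed
  define N where "N = range (\<lambda>i. Suc (c i))"
  have sqe: "sq nxt k = (\<lambda>i. Suc (c i)) ` {..<k}" for k
    using sq_eq[of nxt k] unfolding c_def .
  have loc: "\<forall>y\<le>c k. y \<in> N \<longleftrightarrow> y \<in> sq nxt k" for k
  proof (intro allI impI)
    fix y assume y: "y \<le> c k"
    show "y \<in> N \<longleftrightarrow> y \<in> sq nxt k"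
    proof
      assume "y \<in> N"
      then obtain i where i: "y = Suc (c i)" unfolding N_def by blast
      have "i < k"
      proof (rule ccontr)
        assume "\<not> i < k"
        then have "c k \<le> c i" using smono by (simp add: strict_mono_less_eq not_less)
        then show False using y i by simp
      qed
      then show "y \<in> sq nxt k" unfolding sqe i by blast
    next
      assume "y \<in> sq nxt k" then show "y \<in> N" unfolding sqe N_def by blast
    qed
  qed
  have hit: "M (restr (Sg (gN N)) (c k)) = Some Aw" for k
    using c1(2)[of k] restr_local2[OF loc[of k]] by simp
  have "range c \<subseteq> {n. M (restr (Sg (gN N)) n) = Some Aw}" using hit by blast
  moreover have "infinite (range c)" using smono strict_mono_imp_inj_on range_inj_infinite by blast
  ultimately have inf1: "infinite {n. M (restr (Sg (gN N)) n) = Some Aw}" using finite_subset by blast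
  have infN: "infinite N" unfolding N_def
    using range_inj_infinite[of "\<lambda>i. Suc (c i)"] smono strict_mono_imp_inj_on
    by (metis (mono_tags, lifting) Suc_inject inj_def)
  have "c k \<notin> N" for k
  proof
    assume "c k \<in> N"
    then obtain i where i: "c k = Suc (c i)" unfolding N_def by blast
    show False
    proof (cases "i < k")
      case True
      then have "c (Suc i) \<le> c k" using smono by (simp add: strict_mono_less_eq)
      then show False using cs[of i] i by simp
    next
      case False
      then have "c k \<le> c i" using smono by (simp add: strict_mono_less_eq not_less)
      then show False using i by simp
    qed
  qed
  then have "range c \<subseteq> - N" by blast
  then have infC: "infinite (- N)" using \<open>infinite (range c)\<close> finite_subset by blast
  have isoz: "iso (Sg (gN N)) Az" using iso_inf[OF infN infC] .
  have "Sg (gN N) \<in> LD [2] KK" using in_LD[OF isoz AzK] .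
  then have "iso Aw (Sg (gN N))" using M AwK inf1 by blast
  then have "iso Aw Az" using isoz iso_trans by blast
  then show False using not_iso_Aw_Az by blast
qed

theorem mainTheorem20:
  shows "(\<forall>sig K. family sig K \<and> finite K \<and> PL_learnable sig K \<longrightarrow> Eset_learnable sig K) \<and>
         (\<exists>sig K. family sig K \<and> finite K \<and> Eset_learnable sig K \<and> \<not> PL_learnable sig K)"
proof
  show "\<forall>sig K. family sig K \<and> finite K \<and> PL_learnable sig K \<longrightarrow> Eset_learnable sig K"
    using part1 by blast
  have "finite KK" unfolding KK_def by simp
  then show "\<exists>sig K. family sig K \<and> finite K \<and> Eset_learnable sig K \<and> \<not> PL_learnable sig K"
    using family_KK Eset_KK not_PL_KK by blast
qed

end
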